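(* Let $G=(V,E)$ be a connected graph with $n=|V|\ge 2$, edge weights $w$ and edge costs $c$. Let $F\subseteq E$ be such that $G\setminus F$ is connected, with cost $B=c(F)$ and profit $\Delta=p_G(F)$. Then there exist an integer $t\le n$ and partial cuts $C_1,\dots,C_{t-1}$ in $G$ (each of the form $C_G(S_i,W_i)$) such that $\sum_{i=1}^{t-1}c(C_i)\le 2B\log n$ and $\sum_{i=1}^{t-1}p_G(C_i)\ge\Delta$.
   Context: $G=(V,E)$ is a finite undirected graph (parallel edges allowed) with edge weights $w:E\to\mathbb{R}_{\ge0}$ and removal costs $c:E\to\mathbb{R}_{>0}$; $c(F)=\sum_{f\in F}c(f)$; $G\setminus F=(V,E\setminus F)$. $\mathrm{MST}(H)$ is the weight of a minimum spanning tree of $H$ w.r.t. $w$, with $\mathrm{MST}(H)=\infty$ if $H$ is disconnected. The profit is $p_G(F)=\mathrm{MST}(G\setminus F)-\mathrm{MST}(G)$. For $\emptyset\ne S\subsetneq V$, the complete cut is $C_G(S)=\{e\in E:|e\cap S|=1\}$ and, for $W\in\mathbb{R}$, the partial cut is $C_G(S,W)=\{e\in C_G(S):w(e)<W\}$. $\log$ denotes $\log_2$. *)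

theory Defs
  imports "HOL-Library.Extended_Real"
begin

text \<open>A finite undirected multigraph: vertex set V, edge set E (edges are abstract
  objects, so parallel edges are allowed), and an endpoint map ends.\<close>

definition graph :: "'v set \<Rightarrow> 'e set \<Rightarrow> ('e \<Rightarrow> 'v set) \<Rightarrow> bool" where
  "graph V E ends \<longleftrightarrow> finite V \<and> finite E \<and> (\<forall>e\<in>E. ends e \<subseteq> V \<and> card (ends e) = 2)"

definition adj :: "('e \<Rightarrow> 'v set) \<Rightarrow> 'e set \<Rightarrow> ('v \<times> 'v) set" where
  "adj ends T = {(u, v). \<exists>e\<in>T. ends e = {u, v}}"

definition connected_graph :: "'v set \<Rightarrow> ('e \<Rightarrow> 'v set) \<Rightarrow> 'e set \<Rightarrow> bool" where
  "connected_graph V ends T \<longleftrightarrow> (\<forall>u\<in>V. \<forall>v\<in>V. (u, v) \<in> (adj ends T)\<^sup>*)"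

definition spanning_tree :: "'v set \<Rightarrow> ('e \<Rightarrow> 'v set) \<Rightarrow> 'e set \<Rightarrow> 'e set \<Rightarrow> bool" where
  "spanning_tree V ends H T \<longleftrightarrow> T \<subseteq> H \<and> connected_graph V ends T
      \<and> (\<forall>e\<in>T. \<not> connected_graph V ends (T - {e}))"

text \<open>MST weight; Inf of the empty set is \<infinity>, i.e. disconnected graphs get \<infinity>.\<close>
definition MST :: "'v set \<Rightarrow> ('e \<Rightarrow> 'v set) \<Rightarrow> ('e \<Rightarrow> real) \<Rightarrow> 'e set \<Rightarrow> ereal" where
  "MST V ends w H = (INF T \<in> {T. spanning_tree V ends H T}. ereal (sum w T))"

definition profit :: "'v set \<Rightarrow> 'e set \<Rightarrow> ('e \<Rightarrow> 'v set) \<Rightarrow> ('e \<Rightarrow> real) \<Rightarrow> 'e set \<Rightarrow> ereal" where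
  "profit V E ends w F = MST V ends w (E - F) - MST V ends w E"

definition cost :: "('e \<Rightarrow> real) \<Rightarrow> 'e set \<Rightarrow> real" where
  "cost c F = sum c F"

definition complete_cut :: "'e set \<Rightarrow> ('e \<Rightarrow> 'v set) \<Rightarrow> 'v set \<Rightarrow> 'e set" where
  "complete_cut E ends S = {e \<in> E. card (ends e \<inter> S) = 1}"

definition partial_cut :: "'e set \<Rightarrow> ('e \<Rightarrow> 'v set) \<Rightarrow> ('e \<Rightarrow> real) \<Rightarrow> 'v set \<Rightarrow> real \<Rightarrow> 'e set" where
  "partial_cut E ends w S W = {e \<in> complete_cut E ends S. w e < W}"

end

theory Submission
  imports Defs
begin


locale mg =
  fixes V :: "'v set" and E :: "'e set" and ends :: "'e \<Rightarrow> 'v set"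
  assumes gr: "graph V E ends"
begin

definition cls :: "'e set \<Rightarrow> 'v \<Rightarrow> 'v set" where
  "cls A v = {u\<in>V. (v,u) \<in> (adj ends A)\<^sup>*}"

definition comps :: "'e set \<Rightarrow> 'v set set" where
  "comps A = cls A ` V"

definition k :: "'e set \<Rightarrow> nat" where
  "k A = card (comps A)"

lemma finV: "finite V" and finE: "finite E" using gr unfolding graph_def by auto

lemma ends2: "e \<in> E \<Longrightarrow> \<exists>a b. ends e = {a,b} \<and> a \<noteq> b \<and> a \<in> V \<and> b \<in> V"
  using gr unfolding graph_def by (metis card_2_iff insert_subset)

lemma adj_sym: "(u,v) \<in> adj ends A \<Longrightarrow> (v,u) \<in> adj ends A"
  unfolding adj_def by (auto simp: insert_commute)

lemma R_sym: "(u,v) \<in> (adj ends A)\<^sup>* \<Longrightarrow> (v,u) \<in> (adj ends A)\<^sup>*"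
proof (induction rule: rtrancl_induct)
  case base then show ?case by simp
next
  case (step y z)
  then show ?case using adj_sym by (meson converse_rtrancl_into_rtrancl)
qed

lemma adj_mono: "A \<subseteq> B \<Longrightarrow> adj ends A \<subseteq> adj ends B"
  unfolding adj_def by auto

lemma adjV: "A \<subseteq> E \<Longrightarrow> (u,v) \<in> adj ends A \<Longrightarrow> u \<in> V \<and> v \<in> V"
  using gr unfolding adj_def graph_def by blast

lemma cls_self: "v \<in> V \<Longrightarrow> v \<in> cls A v" unfolding cls_def by auto

lemma cls_sub: "cls A v \<subseteq> V" unfolding cls_def by auto

lemma cls_eq: "u \<in> cls A v \<Longrightarrow> cls A u = cls A v"
  unfolding cls_def using R_sym by (auto intro: rtrancl_trans)

lemma cls_disj: "cls A u \<noteq> cls A v \<Longrightarrow> cls A u \<inter> cls A v = {}"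
  using cls_eq by blast

lemma cls_mono: "A \<subseteq> B \<Longrightarrow> cls A v \<subseteq> cls B v"
  unfolding cls_def using rtrancl_mono[OF adj_mono] by blast

lemma comps_fin: "finite (comps A)" unfolding comps_def using finV by simp

lemma k_le: "k A \<le> card V" unfolding k_def comps_def using finV card_image_le by blast

lemma k_pos: "V \<noteq> {} \<Longrightarrow> k A \<ge> 1"
  unfolding k_def comps_def using finV by (simp add: Suc_le_eq card_gt_0_iff)

lemma comps_nonempty: "K \<in> comps A \<Longrightarrow> K \<noteq> {}"
  unfolding comps_def using cls_self by blast

lemma comps_sub: "K \<in> comps A \<Longrightarrow> K \<subseteq> V"
  unfolding comps_def using cls_sub by blast

lemma comps_disj: "K \<in> comps A \<Longrightarrow> K' \<in> comps A \<Longrightarrow> K \<noteq> K' \<Longrightarrow> K \<inter> K' = {}"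
  unfolding comps_def using cls_disj by blast

lemma comps_cls: "K \<in> comps A \<Longrightarrow> v \<in> K \<Longrightarrow> K = cls A v"
  unfolding comps_def using cls_eq by blast

lemma cls_in_comps: "v \<in> V \<Longrightarrow> cls A v \<in> comps A"
  unfolding comps_def by blast

lemma k_mono: assumes "A \<subseteq> B" shows "k B \<le> k A"
proof -
  let ?phi = "\<lambda>K. \<Union> (cls B ` K)"
  have "comps B = ?phi ` comps A"
  proof -
    have "?phi (cls A v) = cls B v" if "v \<in> V" for v
    proof -
      have "\<forall>x\<in>cls A v. cls B x = cls B v"
        using cls_mono[OF assms] cls_eq by blast
      then show ?thesis using cls_self[OF that] by blast
    qed
    then show ?thesis unfolding comps_def image_image by (auto simp: image_iff)
  qed
  then show ?thesis unfolding k_def using card_image_le comps_fin by metis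
qed

lemma conn_iff: "connected_graph V ends A \<longleftrightarrow> (\<forall>v\<in>V. cls A v = V)"
  unfolding connected_graph_def cls_def by auto

lemma k_conn: "connected_graph V ends A \<Longrightarrow> V \<noteq> {} \<Longrightarrow> k A = 1"
  unfolding k_def comps_def conn_iff by (simp add: image_constant_conv)

lemma k_empty: "k {} = card V"
proof -
  have "cls {} v = {v}" if "v \<in> V" for v
    using that unfolding cls_def adj_def by auto
  then have "comps {} = (\<lambda>v. {v}) ` V" unfolding comps_def by auto
  then show ?thesis unfolding k_def by (simp add: card_image)
qed

lemma same_cls_k: "(\<forall>v\<in>V. cls A v = cls B v) \<Longrightarrow> k A = k B"
  unfolding k_def comps_def by (metis image_cong)

lemma cls_insert:
  assumes A: "A \<subseteq> E" and eE: "e \<in> E" and e: "ends e = {a,b}" "a \<in> V" "b \<in> V" and x: "x \<in> V"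
  shows "cls (insert e A) x = (if x \<in> cls A a \<union> cls A b then cls A a \<union> cls A b else cls A x)"
    (is "_ = ?T")
proof
  have closed: "z \<in> ?T" if "y \<in> ?T" "(y,z) \<in> adj ends (insert e A)" "z \<in> V" for y z
  proof -
    from that(2) consider "(y,z) \<in> adj ends A" | "ends e = {y,z}" unfolding adj_def by auto
    then show ?thesis
    proof cases
      case 1
      then have "z \<in> cls A y" unfolding cls_def using that(3) by auto
      then show ?thesis using that(1) cls_eq by (auto split: if_splits)
    next
      case 2
      then have "y \<in> {a,b}" "z \<in> {a,b}" using e by auto
      then have "y \<in> cls A a \<union> cls A b" "z \<in> cls A a \<union> cls A b"
        using cls_self[OF e(2), of A] cls_self[OF e(3), of A] by blast+
      show ?thesis
      proof (cases "x \<in> cls A a \<union> cls A b")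
        case True then show ?thesis using \<open>z \<in> cls A a \<union> cls A b\<close> by simp
      next
        case False
        then have "y \<in> cls A x" using that(1) by simp
        then have "cls A x = cls A y" using cls_eq by metis
        moreover have "cls A y = cls A a \<or> cls A y = cls A b"
          using \<open>y \<in> cls A a \<union> cls A b\<close> cls_eq by (metis Un_iff)
        ultimately have "x \<in> cls A a \<union> cls A b" using cls_self[OF x] by blast
        then show ?thesis using False by blast
      qed
    qed
  qed
  have "z \<in> ?T" if "(x,z) \<in> (adj ends (insert e A))\<^sup>*" "z \<in> V" for z
    using that
  proof (induction rule: rtrancl_induct)
    case base then show ?case using cls_self x by auto
  next
    case (step y z)
    have "insert e A \<subseteq> E" using A eE by simp
    then have yV: "y \<in> V" using step(2) adjV[of "insert e A" y z] by simp
    then show ?case using closed[of y z] step by simp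
  qed
  note * = this
  show "cls (insert e A) x \<subseteq> ?T"
  proof
    fix z assume "z \<in> cls (insert e A) x"
    then have "(x,z) \<in> (adj ends (insert e A))\<^sup>*" "z \<in> V" unfolding cls_def by auto
    then show "z \<in> ?T" using * by blast
  qed
next
  have sub: "cls A y \<subseteq> cls (insert e A) y" for y using cls_mono by blast
  have ab: "b \<in> cls (insert e A) a" unfolding cls_def adj_def using e by auto
  show "?T \<subseteq> cls (insert e A) x"
  proof (cases "x \<in> cls A a \<union> cls A b")
    case True
    then have "cls (insert e A) x = cls (insert e A) a"
      using sub cls_eq ab by (metis Un_iff subsetD)
    moreover have "cls (insert e A) b = cls (insert e A) a" using ab cls_eq by blast
    ultimately show ?thesis using True sub by auto
  next
    case False then show ?thesis using sub by auto
  qed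
qed

lemma comps_insert:
  assumes A: "A \<subseteq> E" and eE: "e \<in> E" and e: "ends e = {a,b}" "a \<in> V" "b \<in> V"
  shows "comps (insert e A) = (comps A - {cls A a, cls A b}) \<union> {cls A a \<union> cls A b}"
proof
  show "comps (insert e A) \<subseteq> (comps A - {cls A a, cls A b}) \<union> {cls A a \<union> cls A b}"
  proof
    fix K assume "K \<in> comps (insert e A)"
    then obtain x where x: "x \<in> V" "K = cls (insert e A) x" unfolding comps_def by auto
    show "K \<in> (comps A - {cls A a, cls A b}) \<union> {cls A a \<union> cls A b}"
    proof (cases "x \<in> cls A a \<union> cls A b")
      case True then show ?thesis using x cls_insert[OF A eE e x(1)] by simp
    next
      case False
      then have "cls A x \<noteq> cls A a" "cls A x \<noteq> cls A b" using cls_self[OF x(1)] by auto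
      then show ?thesis using x cls_insert[OF A eE e x(1)] False cls_in_comps by simp
    qed
  qed
next
  show "(comps A - {cls A a, cls A b}) \<union> {cls A a \<union> cls A b} \<subseteq> comps (insert e A)"
  proof
    fix K assume K: "K \<in> (comps A - {cls A a, cls A b}) \<union> {cls A a \<union> cls A b}"
    show "K \<in> comps (insert e A)"
    proof (cases "K = cls A a \<union> cls A b")
      case True
      then have "K = cls (insert e A) a" using cls_insert[OF A eE e e(2)] cls_self[OF e(2)] by simp
      then show ?thesis using cls_in_comps e(2) by simp
    next
      case False
      then have K1: "K \<in> comps A" "K \<noteq> cls A a" "K \<noteq> cls A b" using K by auto
      then obtain x where x: "x \<in> V" "K = cls A x" unfolding comps_def by auto
      have "x \<notin> cls A a \<union> cls A b" using K1 x cls_eq by blast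
      then have "K = cls (insert e A) x" using cls_insert[OF A eE e x(1)] x by simp
      then show ?thesis using cls_in_comps x(1) by simp
    qed
  qed
qed

lemma k_insert_same:
  assumes A: "A \<subseteq> E" and eE: "e \<in> E" and e: "ends e = {a,b}" "a \<in> V" "b \<in> V"
    and same: "cls A a = cls A b"
  shows "k (insert e A) = k A"
proof -
  have "cls A a \<in> comps A" using cls_in_comps e(2) by simp
  then have "comps (insert e A) = comps A" using comps_insert[OF assms(1-5)] same by auto
  then show ?thesis unfolding k_def by simp
qed

lemma k_insert_diff:
  assumes A: "A \<subseteq> E" and eE: "e \<in> E" and e: "ends e = {a,b}" "a \<in> V" "b \<in> V"
    and diff: "cls A a \<noteq> cls A b"
  shows "k (insert e A) + 1 = k A"
proof -
  have in1: "cls A a \<in> comps A" "cls A b \<in> comps A" using cls_in_comps e(2,3) by auto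
  have notin: "cls A a \<union> cls A b \<notin> comps A - {cls A a, cls A b}"
  proof
    assume "cls A a \<union> cls A b \<in> comps A - {cls A a, cls A b}"
    then have "cls A a \<union> cls A b \<in> comps A" "cls A a \<union> cls A b \<noteq> cls A a" by auto
    then have "(cls A a \<union> cls A b) \<inter> cls A a = {}" using comps_disj in1 by blast
    then show False using cls_self[OF e(2)] by blast
  qed
  have sub: "{cls A a, cls A b} \<subseteq> comps A" using in1 by auto
  have c2: "card {cls A a, cls A b} = 2" using diff by simp
  have "card {cls A a, cls A b} \<le> card (comps A)" using card_mono[OF comps_fin sub] .
  moreover have "card (comps A - {cls A a, cls A b}) = card (comps A) - card {cls A a, cls A b}"
    using card_Diff_subset[OF _ sub] by auto
  ultimately have "card (comps A - {cls A a, cls A b}) + 2 = k A"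
    unfolding k_def using c2 by simp
  then show ?thesis unfolding k_def comps_insert[OF assms(1-5)] using notin comps_fin by simp
qed

lemma k_insert_ge: assumes "A \<subseteq> E" "e \<in> E" shows "k A \<le> k (insert e A) + 1"
proof -
  obtain a b where "ends e = {a,b}" "a \<in> V" "b \<in> V" using ends2 assms(2) by blast
  then show ?thesis using k_insert_same[OF assms] k_insert_diff[OF assms]
    by (cases "cls A a = cls A b") auto
qed

lemma k_union: assumes "finite D" "A \<subseteq> E" "D \<subseteq> E" shows "k A \<le> k (A \<union> D) + card D"
  using assms
proof (induction D rule: finite_induct)
  case empty then show ?case by simp
next
  case (insert e D)
  have "k (A \<union> D) \<le> k (insert e (A \<union> D)) + 1"
    using k_insert_ge[of "A \<union> D" e] insert by auto
  then show ?case using insert by auto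
qed

lemma augment:
  assumes "A \<subseteq> B" "B \<subseteq> E"
  shows "\<exists>A'. A \<subseteq> A' \<and> A' \<subseteq> B \<and> (\<forall>v\<in>V. cls A' v = cls B v) \<and> card (A' - A) + k B \<le> k A"
  using assms
proof (induction "card (B - A)" arbitrary: A rule: less_induct)
  case less
  show ?case
  proof (cases "\<exists>e\<in>B - A. \<exists>a b. ends e = {a,b} \<and> cls A a \<noteq> cls A b")
    case False
    note nocross = False
    have "cls B v \<subseteq> cls A v" if v: "v \<in> V" for v
    proof -
      have "u \<in> cls A v" if "(v,u) \<in> (adj ends B)\<^sup>*" for u
        using that
      proof (induction rule: rtrancl_induct)
        case base then show ?case using cls_self v by simp
      next
        case (step y z)
        then obtain e where e: "e \<in> B" "ends e = {y,z}" unfolding adj_def by auto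
        have zV: "z \<in> V" using adjV[OF less(3)] step(2) by blast
        show ?case
        proof (cases "e \<in> A")
          case True
          then have "(y,z) \<in> adj ends A" using e unfolding adj_def by auto
          then have "z \<in> cls A y" using zV unfolding cls_def by auto
          then show ?thesis using cls_eq step(3) by metis
        next
          case False
          then have "cls A y = cls A z" using nocross e by blast
          then show ?thesis using cls_self[OF zV] cls_eq step(3) by metis
        qed
      qed
      then show ?thesis using cls_def[of B v] by blast
    qed
    then have "\<forall>v\<in>V. cls A v = cls B v" using cls_mono[OF less(2)] by (simp add: subset_antisym)
    moreover from this have "k A = k B" by (rule same_cls_k)
    ultimately show ?thesis using less(2) by (intro exI[of _ A]) auto
  next
    case True
    then obtain e a b where e: "e \<in> B - A" "ends e = {a,b}" "cls A a \<noteq> cls A b" by blast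
    have eE: "e \<in> E" using e less(3) by auto
    have "ends e \<subseteq> V" using gr eE unfolding graph_def by blast
    then have ab: "a \<in> V" "b \<in> V" using e(2) by auto
    have A: "A \<subseteq> E" using less(2,3) by auto
    have k1: "k (insert e A) + 1 = k A" using k_insert_diff[OF A eE e(2) ab e(3)] .
    have lt: "card (B - insert e A) < card (B - A)"
    proof (rule psubset_card_mono)
      show "finite (B - A)" using finE less(3) by (meson finite_Diff finite_subset)
      show "B - insert e A \<subset> B - A" using e(1) by auto
    qed
    have ins: "insert e A \<subseteq> B" using e(1) less(2) by auto
    from less(1)[OF lt ins less(3)] obtain A' where A': "insert e A \<subseteq> A'" "A' \<subseteq> B" "\<forall>v\<in>V. cls A' v = cls B v"
      "card (A' - insert e A) + k B \<le> k (insert e A)" by (elim exE conjE)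
    have "A' \<subseteq> E" using A'(2) less(3) by (rule order_trans)
    then have "finite A'" using finE by (rule finite_subset)
    then have fA': "finite (A' - insert e A)" by simp
    have eq: "A' - A = insert e (A' - insert e A)" using A'(1) e(1) by auto
    have ni: "e \<notin> A' - insert e A" by blast
    have c: "card (A' - A) = card (A' - insert e A) + 1"
      unfolding eq card_insert_disjoint[OF fA' ni] by (rule Suc_eq_plus1)
    have "A \<subseteq> A'" using A'(1) by simp
    moreover have "card (A' - A) + k B \<le> k A" using c A'(4) k1 by linarith
    ultimately show ?thesis using A'(2,3) by (intro exI[of _ A'] conjI)
  qed
qed
end


locale wg = mg V E ends for V :: "'v set" and E :: "'e set" and ends +
  fixes w :: "'e \<Rightarrow> real"
  assumes wnn: "\<forall>e\<in>E. w e \<ge> 0" and Vne: "V \<noteq> {}"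
begin

definition L :: "real list" where "L = sorted_list_of_set (insert 0 (w ` E))"
definition m :: nat where "m = length L"
definition tau :: "nat \<Rightarrow> real" where
  "tau l = (if l < m then L ! l else L ! (m - 1) + 1)"
definition lt :: "'e set \<Rightarrow> real \<Rightarrow> 'e set" where "lt H W = {e\<in>H. w e < W}"
definition d :: "nat \<Rightarrow> real" where "d l = tau l - tau (l - 1)"
definition f :: "'e set \<Rightarrow> real" where
  "f H = (\<Sum>l\<in>{1..<m}. d l * (real (k (lt H (tau l))) - 1))"

lemma finWs: "finite (insert 0 (w ` E))" using finE by simp

lemma setL: "set L = insert 0 (w ` E)" unfolding L_def by (rule set_sorted_list_of_set[OF finWs])

lemma m_pos: "m \<ge> 1"
proof -
  have "0 \<in> set L" using setL by simp
  then show ?thesis unfolding m_def by (cases L) auto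
qed

lemma Lstrict: "i < j \<Longrightarrow> j < m \<Longrightarrow> L ! i < L ! j"
  using sorted_wrt_nth_less[OF strict_sorted_list_of_set] unfolding L_def m_def by blast

lemma tau_strict: assumes "i < j" "j \<le> m" shows "tau i < tau j"
proof (cases "j < m")
  case True then show ?thesis using Lstrict assms unfolding tau_def by auto
next
  case False
  then have j: "j = m" using assms by simp
  show ?thesis
  proof (cases "i = m - 1")
    case True then show ?thesis using j m_pos unfolding tau_def by auto
  next
    case False
    then have "i < m - 1" using assms j by simp
    then have "L ! i < L ! (m - 1)" using Lstrict m_pos by simp
    then show ?thesis using j assms unfolding tau_def by auto
  qed
qed

lemma tau_mono: "i \<le> j \<Longrightarrow> j \<le> m \<Longrightarrow> tau i \<le> tau j"
  using tau_strict by (cases "i = j") (auto simp: less_imp_le)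

lemma d_nn: "1 \<le> l \<Longrightarrow> l \<le> m \<Longrightarrow> d l \<ge> 0"
  unfolding d_def using tau_mono[of "l - 1" l] by simp

lemma L_ge0: "x \<in> set L \<Longrightarrow> x \<ge> 0" using setL wnn by auto

lemma tau0: "tau 0 = 0"
proof -
  have "0 \<in> set L" using setL by simp
  then obtain q where q: "q < m" "L ! q = 0" unfolding m_def by (metis in_set_conv_nth)
  have "0 < length L" using m_pos unfolding m_def by linarith
  then have "L ! 0 \<in> set L" by (rule nth_mem)
  then have "L ! 0 \<ge> 0" using L_ge0 by blast
  moreover have "L ! 0 \<le> L ! q" using Lstrict[of 0 q] q by (cases q) auto
  ultimately show ?thesis using q m_pos unfolding tau_def by auto
qed

lemma w_level: "e \<in> E \<Longrightarrow> \<exists>q<m. w e = tau q"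
proof -
  assume "e \<in> E"
  then have "w e \<in> set L" using setL by simp
  then obtain q where q: "q < m" "L ! q = w e" unfolding m_def by (metis in_set_conv_nth)
  then have "w e = tau q" unfolding tau_def by simp
  then show ?thesis using q(1) by blast
qed

lemma w_lt_top: "e \<in> E \<Longrightarrow> w e < tau m"
  using w_level tau_strict by fastforce

lemma lt_top: "H \<subseteq> E \<Longrightarrow> lt H (tau m) = H"
  unfolding lt_def using w_lt_top by auto

lemma lt_bot: "H \<subseteq> E \<Longrightarrow> lt H (tau 0) = {}"
  unfolding lt_def tau0 using wnn by force

lemma lt_sub: "lt H W \<subseteq> H" unfolding lt_def by auto

lemma lt_mono: "W \<le> W' \<Longrightarrow> H \<subseteq> H' \<Longrightarrow> lt H W \<subseteq> lt H' W'"
  unfolding lt_def by auto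

lemma w_decomp: assumes "e \<in> E"
  shows "w e = (\<Sum>l\<in>{1..<m}. d l * (if tau l \<le> w e then 1 else 0))"
proof -
  obtain q where q: "q < m" "w e = tau q" using w_level[OF assms] by blast
  have "(\<Sum>l\<in>{1..<m}. d l * (if tau l \<le> w e then 1 else 0)) = (\<Sum>l\<in>{1..<m}. if l \<le> q then d l else 0)"
  proof (rule sum.cong)
    fix l assume "l \<in> {1..<m}"
    then have "tau l \<le> tau q \<longleftrightarrow> l \<le> q" using tau_strict q(1)
      by (metis atLeastLessThan_iff leD less_imp_le_nat linorder_le_less_linear tau_mono)
    then show "d l * (if tau l \<le> w e then 1 else 0) = (if l \<le> q then d l else 0)" using q by simp
  qed simp
  also have "\<dots> = (\<Sum>l\<in>{1..q}. d l)"
    using q(1) by (intro sum.mono_neutral_cong_right) auto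
  also have "\<dots> = tau q - tau 0"
  proof (induction q)
    case 0 then show ?case by simp
  next
    case (Suc q) then show ?case unfolding d_def by simp
  qed
  finally show ?thesis using q tau0 by simp
qed

lemma sum_w: assumes "T \<subseteq> E"
  shows "sum w T = (\<Sum>l\<in>{1..<m}. d l * real (card {e\<in>T. tau l \<le> w e}))"
proof -
  have fT: "finite T" using assms finE finite_subset by blast
  have "sum w T = (\<Sum>e\<in>T. \<Sum>l\<in>{1..<m}. d l * (if tau l \<le> w e then 1 else 0))"
    using w_decomp assms by (intro sum.cong) auto
  also have "\<dots> = (\<Sum>l\<in>{1..<m}. d l * (\<Sum>e\<in>T. (if tau l \<le> w e then 1 else 0)))"
    by (subst sum.swap) (simp add: sum_distrib_left)
  also have "\<dots> = (\<Sum>l\<in>{1..<m}. d l * real (card {e\<in>T. tau l \<le> w e}))"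
    using fT by (simp add: sum.If_cases Int_def)
  finally show ?thesis .
qed

lemma A1: assumes "T \<subseteq> H" "H \<subseteq> E" "connected_graph V ends T"
  shows "f H \<le> sum w T"
proof -
  have TE: "T \<subseteq> E" using assms by auto
  have fT: "finite T" using TE finE finite_subset by blast
  have "real (k (lt H (tau l))) - 1 \<le> real (card {e\<in>T. tau l \<le> w e})" for l
  proof -
    have "T = lt T (tau l) \<union> {e\<in>T. tau l \<le> w e}" unfolding lt_def by auto
    moreover have "finite {e\<in>T. tau l \<le> w e}" using fT by simp
    moreover have "lt T (tau l) \<subseteq> E" using TE lt_sub by blast
    moreover have "{e\<in>T. tau l \<le> w e} \<subseteq> E" using TE by blast
    ultimately have "k (lt T (tau l)) \<le> k T + card {e\<in>T. tau l \<le> w e}"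
      using k_union[of "{e\<in>T. tau l \<le> w e}" "lt T (tau l)"] by simp
    moreover have "k T = 1" using k_conn assms(3) Vne by simp
    moreover have "k (lt H (tau l)) \<le> k (lt T (tau l))"
      using k_mono[OF lt_mono[OF order_refl assms(1)]] by blast
    ultimately show ?thesis by linarith
  qed
  note * = this
  have "f H \<le> (\<Sum>l\<in>{1..<m}. d l * real (card {e\<in>T. tau l \<le> w e}))"
    unfolding f_def
  proof (intro sum_mono mult_left_mono)
    fix l assume "l \<in> {1..<m}"
    then show "d l \<ge> 0" using d_nn by simp
  qed (rule *)
  then show ?thesis using sum_w[OF TE] by simp
qed

lemma kruskal: assumes "H \<subseteq> E" "j \<le> m"
  shows "\<exists>A. A \<subseteq> lt H (tau j) \<and> (\<forall>v\<in>V. cls A v = cls (lt H (tau j)) v)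
     \<and> (\<forall>l\<le>j. card {e\<in>A. tau l \<le> w e} + k (lt H (tau j)) \<le> k (lt H (tau l)))"
  using assms(2)
proof (induction j)
  case 0
  show ?case using lt_bot[OF assms(1)] by (intro exI[of _ "{}"]) simp
next
  case (Suc j)
  have "j \<le> m" using Suc(2) by simp
  from Suc(1)[OF this] obtain A where A: "A \<subseteq> lt H (tau j)" "\<forall>v\<in>V. cls A v = cls (lt H (tau j)) v"
     "\<forall>l\<le>j. card {e\<in>A. tau l \<le> w e} + k (lt H (tau j)) \<le> k (lt H (tau l))" by (elim exE conjE)
  have sub: "lt H (tau j) \<subseteq> lt H (tau (Suc j))"
    using tau_mono[of j "Suc j"] Suc(2) by (intro lt_mono) auto
  have HE: "lt H (tau (Suc j)) \<subseteq> E" using lt_sub[of H] assms(1) by (rule order_trans)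
  obtain A' where A': "A \<subseteq> A'" "A' \<subseteq> lt H (tau (Suc j))" "\<forall>v\<in>V. cls A' v = cls (lt H (tau (Suc j))) v"
    "card (A' - A) + k (lt H (tau (Suc j))) \<le> k A"
    using augment[OF order_trans[OF A(1) sub] HE] by (elim exE conjE)
  have kA: "k A = k (lt H (tau j))" using same_cls_k[OF A(2)] .
  have finA': "finite A'" using finite_subset[OF order_trans[OF A'(2) HE] finE] .
  have "card {e\<in>A'. tau l \<le> w e} + k (lt H (tau (Suc j))) \<le> k (lt H (tau l))" if l: "l \<le> Suc j" for l
  proof (cases "l = Suc j")
    case True
    have e0: "{e\<in>A'. tau l \<le> w e} = {}" using A'(2) True unfolding lt_def by auto
    have "card {e\<in>A'. tau l \<le> w e} = 0" by (simp only: e0 card.empty)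
    then show ?thesis using True by simp
  next
    case False
    then have l: "l \<le> j" using l by simp
    have "{e\<in>A'. tau l \<le> w e} \<subseteq> {e\<in>A. tau l \<le> w e} \<union> (A' - A)" by auto
    then have "card {e\<in>A'. tau l \<le> w e} \<le> card {e\<in>A. tau l \<le> w e} + card (A' - A)"
    proof -
      have "card {e\<in>A'. tau l \<le> w e} \<le> card ({e\<in>A. tau l \<le> w e} \<union> (A' - A))"
        using finA' finite_subset[OF A'(1) finA'] A'(1) by (intro card_mono) auto
      also have "\<dots> \<le> card {e\<in>A. tau l \<le> w e} + card (A' - A)" by (rule card_Un_le)
      finally show ?thesis .
    qed
    moreover have "card {e\<in>A. tau l \<le> w e} + k (lt H (tau j)) \<le> k (lt H (tau l))" using A(3) l by simp
    ultimately show ?thesis using A'(4) kA by linarith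
  qed
  then show ?case using A'(2,3) by (intro exI[of _ A'] conjI allI impI) auto
qed

lemma A2: assumes "H \<subseteq> E" "connected_graph V ends H"
  shows "\<exists>T. spanning_tree V ends H T \<and> sum w T \<le> f H"
proof -
  obtain A where A: "A \<subseteq> lt H (tau m)" "\<forall>v\<in>V. cls A v = cls (lt H (tau m)) v"
     "\<forall>l\<le>m. card {e\<in>A. tau l \<le> w e} + k (lt H (tau m)) \<le> k (lt H (tau l))"
    using kruskal[OF assms(1) order_refl] by blast
  have AH: "A \<subseteq> H" using A(1) lt_top[OF assms(1)] by simp
  have AE: "A \<subseteq> E" using AH assms(1) by simp
  have conA: "connected_graph V ends A" using A(2) assms(2) unfolding lt_top[OF assms(1)] conn_iff by simp
  have kH: "k (lt H (tau m)) = 1" unfolding lt_top[OF assms(1)] using k_conn[OF assms(2) Vne] .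
  have "sum w A \<le> f H"
  proof -
    have "sum w A = (\<Sum>l\<in>{1..<m}. d l * real (card {e\<in>A. tau l \<le> w e}))" using sum_w[OF AE] .
    also have "\<dots> \<le> f H" unfolding f_def
    proof (intro sum_mono mult_left_mono)
      fix l assume l: "l \<in> {1..<m}"
      then show "d l \<ge> 0" using d_nn by simp
      show "real (card {e\<in>A. tau l \<le> w e}) \<le> real (k (lt H (tau l))) - 1"
      proof -
        have "card {e\<in>A. tau l \<le> w e} + 1 \<le> k (lt H (tau l))" using A(3) l kH by simp
        then have "real (card {e\<in>A. tau l \<le> w e}) + 1 \<le> real (k (lt H (tau l)))"
          by (metis of_nat_1 of_nat_add of_nat_le_iff)
        then show ?thesis by linarith
      qed
    qed
    finally show ?thesis .
  qed
  obtain T where T: "T \<subseteq> A \<and> connected_graph V ends T"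
     "\<forall>T'. T' \<subseteq> A \<and> connected_graph V ends T' \<longrightarrow> card T \<le> card T'"
    using ex_has_least_nat[of "\<lambda>T. T \<subseteq> A \<and> connected_graph V ends T" A card] conA by auto
  have finA: "finite A" using finite_subset[OF AE finE] .
  have finT: "finite T" using finite_subset[OF _ finA] T(1) by blast
  have "\<not> connected_graph V ends (T - {e})" if "e \<in> T" for e
  proof
    assume c: "connected_graph V ends (T - {e})"
    have "card (T - {e}) < card T" using card_Diff1_less[OF finT that] .
    moreover have "T - {e} \<subseteq> A" using T(1) by blast
    ultimately show False using T(2) c by (meson leD)
  qed
  then have st: "spanning_tree V ends H T" unfolding spanning_tree_def using T(1) AH by blast
  have "sum w T \<le> sum w A" using T(1) finA wnn AE by (intro sum_mono2) auto
  then show ?thesis using st \<open>sum w A \<le> f H\<close> by auto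
qed

lemma MST_ge: assumes "H \<subseteq> E" shows "ereal (f H) \<le> MST V ends w H"
  unfolding MST_def
proof (rule INF_greatest)
  fix T assume "T \<in> {T. spanning_tree V ends H T}"
  then have "T \<subseteq> H" "connected_graph V ends T" unfolding spanning_tree_def by auto
  then show "ereal (f H) \<le> ereal (sum w T)" using A1 assms by simp
qed

lemma MST_eq: assumes "H \<subseteq> E" "connected_graph V ends H" shows "MST V ends w H = ereal (f H)"
proof (rule antisym)
  obtain T where "spanning_tree V ends H T" "sum w T \<le> f H" using A2[OF assms] by blast
  then have "MST V ends w H \<le> ereal (sum w T)" unfolding MST_def by (intro INF_lower) auto
  then show "MST V ends w H \<le> ereal (f H)" using \<open>sum w T \<le> f H\<close> order_trans by fastforce
  show "ereal (f H) \<le> MST V ends w H" using MST_ge assms by simp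
qed

end


locale inst = wg V E ends w for V :: "'v set" and E :: "'e set" and ends and w +
  fixes F :: "'e set" and c :: "'e \<Rightarrow> real"
  assumes FE: "F \<subseteq> E" and connE: "connected_graph V ends E"
    and connEF: "connected_graph V ends (E - F)" and cnn: "\<forall>e\<in>E. c e \<ge> 0"
begin

definition QA :: "nat \<Rightarrow> 'e set" where "QA i = lt (E - F) (tau i)"
definition Q :: "nat \<Rightarrow> 'v set set" where "Q i = comps (QA i)"
definition P :: "nat \<Rightarrow> 'v set set" where "P l = comps (lt E (tau l))"
definition hv :: "nat \<Rightarrow> 'v set \<Rightarrow> 'v set" where
  "hv i Z = (SOME X. X \<in> Q i \<and> X \<subseteq> Z \<and> (\<forall>X'\<in>Q i. X' \<subseteq> Z \<longrightarrow> card X' \<le> card X))"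
definition Lt :: "nat \<Rightarrow> 'v set set" where "Lt i = Q i - hv i ` Q (Suc i)"
definition Prs :: "(nat \<times> 'v set) set" where "Prs = Sigma {..<m} Lt"
definition cutp :: "nat \<times> 'v set \<Rightarrow> 'e set" where
  "cutp p = partial_cut E ends w (snd p) (tau (fst p))"

lemma QA_E: "QA i \<subseteq> E" unfolding QA_def using lt_sub by blast

lemma QA_mono: "i \<le> j \<Longrightarrow> j \<le> m \<Longrightarrow> QA i \<subseteq> QA j"
  unfolding QA_def using tau_mono by (intro lt_mono) auto

lemma Q_fin: "finite (Q i)" unfolding Q_def by (rule comps_fin)

lemma Q_cls: "X \<in> Q i \<Longrightarrow> v \<in> X \<Longrightarrow> X = cls (QA i) v"
  unfolding Q_def by (rule comps_cls)

lemma Q_sub_next: assumes "X \<in> Q i" "i < m" "v \<in> X"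
  shows "X \<subseteq> cls (QA (Suc i)) v" "cls (QA (Suc i)) v \<in> Q (Suc i)"
proof -
  have vV: "v \<in> V" using assms comps_sub unfolding Q_def by blast
  show "X \<subseteq> cls (QA (Suc i)) v" using Q_cls[OF assms(1,3)] cls_mono[OF QA_mono[of i "Suc i"]] assms(2) by simp
  show "cls (QA (Suc i)) v \<in> Q (Suc i)" unfolding Q_def using cls_in_comps[OF vV] .
qed

lemma hv_prop: assumes "Z \<in> Q (Suc i)" "i < m"
  shows "hv i Z \<in> Q i \<and> hv i Z \<subseteq> Z \<and> (\<forall>X'\<in>Q i. X' \<subseteq> Z \<longrightarrow> card X' \<le> card (hv i Z))"
proof -
  let ?S = "{X\<in>Q i. X \<subseteq> Z}"
  obtain v where v: "v \<in> Z" using comps_nonempty assms(1) unfolding Q_def by blast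
  have vV: "v \<in> V" using v assms(1) comps_sub unfolding Q_def by blast
  have Z: "Z = cls (QA (Suc i)) v" using Q_cls[OF assms(1) v] .
  have "cls (QA i) v \<in> ?S" using cls_in_comps[OF vV] cls_mono[OF QA_mono[of i "Suc i"]] assms(2) Z
    unfolding Q_def by auto
  then have ne: "card ` ?S \<noteq> {}" by blast
  have fin: "finite (card ` ?S)" using Q_fin by simp
  obtain X where X: "X \<in> ?S" "card X = Max (card ` ?S)" using Max_in[OF fin ne] by auto
  have "X \<in> Q i \<and> X \<subseteq> Z \<and> (\<forall>X'\<in>Q i. X' \<subseteq> Z \<longrightarrow> card X' \<le> card X)"
    using X Max_ge[OF fin] by auto
  then show ?thesis unfolding hv_def by (rule someI)
qed

lemma hv_inj: assumes "i < m" shows "inj_on (hv i) (Q (Suc i))"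
proof
  fix Z1 Z2 assume Z: "Z1 \<in> Q (Suc i)" "Z2 \<in> Q (Suc i)" "hv i Z1 = hv i Z2"
  have "hv i Z1 \<noteq> {}" using hv_prop[OF Z(1) assms] comps_nonempty unfolding Q_def by blast
  moreover have "hv i Z1 \<subseteq> Z1 \<inter> Z2" using hv_prop[OF Z(1) assms] hv_prop[OF Z(2) assms] Z(3) by auto
  ultimately show "Z1 = Z2" using comps_disj Z(1,2) unfolding Q_def by blast
qed

lemma card_Lt: assumes "i < m" shows "card (Lt i) + card (Q (Suc i)) = card (Q i)"
proof -
  have sub: "hv i ` Q (Suc i) \<subseteq> Q i" using hv_prop assms by blast
  have "card (hv i ` Q (Suc i)) = card (Q (Suc i))" using card_image[OF hv_inj[OF assms]] .
  moreover have "card (Lt i) = card (Q i) - card (hv i ` Q (Suc i))"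
    unfolding Lt_def using card_Diff_subset[OF finite_subset[OF sub Q_fin] sub] .
  moreover have "card (hv i ` Q (Suc i)) \<le> card (Q i)" using card_mono[OF Q_fin sub] .
  ultimately show ?thesis by linarith
qed

lemma Q0: "card (Q 0) = card V"
  unfolding Q_def QA_def using lt_bot[of "E - F"] k_empty unfolding k_def by auto

lemma Qm: "Q m = {V}"
proof -
  have "QA m = E - F" unfolding QA_def using lt_top by blast
  then have "\<forall>v\<in>V. cls (QA m) v = V" using connEF conn_iff by simp
  then show ?thesis unfolding Q_def comps_def using Vne by auto
qed

lemma Prs_fin: "finite Prs" unfolding Prs_def Lt_def using Q_fin by auto

lemma card_Prs: "card Prs + 1 = card V"
proof -
  have "(\<Sum>i<j. card (Lt i)) + card (Q j) = card (Q 0)" if "j \<le> m" for j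
    using that
  proof (induction j)
    case 0 then show ?case by simp
  next
    case (Suc j)
    then show ?case using card_Lt[of j] by simp
  qed
  note * = this[OF order_refl]
  then have "(\<Sum>i<m. card (Lt i)) + 1 = card V" using Q0 Qm by simp
  moreover have "card Prs = (\<Sum>i<m. card (Lt i))"
    unfolding Prs_def using Q_fin unfolding Lt_def by (subst card_SigmaI) auto
  ultimately show ?thesis by simp
qed

lemma Lt_proper: assumes "i < m" "X \<in> Lt i" shows "X \<noteq> {}" "X \<subset> V"
proof -
  have XQ: "X \<in> Q i" using assms unfolding Lt_def by blast
  then show ne: "X \<noteq> {}" using comps_nonempty unfolding Q_def by blast
  then obtain v where v: "v \<in> X" by blast
  let ?Z = "cls (QA (Suc i)) v"
  have Z: "X \<subseteq> ?Z" "?Z \<in> Q (Suc i)" using Q_sub_next[OF XQ assms(1) v] by auto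
  have H: "hv i ?Z \<in> Q i" "hv i ?Z \<subseteq> ?Z" using hv_prop[OF Z(2) assms(1)] by auto
  have "hv i ?Z \<noteq> X" using assms(2) Z(2) unfolding Lt_def by blast
  then have "hv i ?Z \<inter> X = {}" using comps_disj H(1) XQ unfolding Q_def by blast
  moreover have "hv i ?Z \<noteq> {}" using H(1) comps_nonempty unfolding Q_def by blast
  moreover have "hv i ?Z \<subseteq> V" using H(1) comps_sub unfolding Q_def by blast
  moreover have "X \<subseteq> V" using XQ comps_sub unfolding Q_def by blast
  ultimately show "X \<subset> V" by blast
qed

lemma cut_sub: assumes "X \<in> Q i"
  shows "partial_cut E ends w X (tau i) \<subseteq> F \<inter> complete_cut E ends X"
proof
  fix e assume e: "e \<in> partial_cut E ends w X (tau i)"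
  then have eE: "e \<in> E" and c1: "card (ends e \<inter> X) = 1" and we: "w e < tau i"
    unfolding partial_cut_def complete_cut_def by auto
  have "e \<in> F"
  proof (rule ccontr)
    assume "e \<notin> F"
    then have eQ: "e \<in> QA i" unfolding QA_def lt_def using eE we by auto
    obtain a b where ab: "ends e = {a,b}" "a \<noteq> b" "a \<in> V" "b \<in> V" using ends2[OF eE] by blast
    have adj1: "(a,b) \<in> adj ends (QA i)" "(b,a) \<in> adj ends (QA i)"
      unfolding adj_def using eQ ab(1) by (auto simp: insert_commute)
    have "a \<in> X \<longleftrightarrow> b \<in> X"
    proof
      assume "a \<in> X" then have "X = cls (QA i) a" using Q_cls assms by blast
      then show "b \<in> X" using adj1 ab unfolding cls_def by auto
    next
      assume "b \<in> X" then have "X = cls (QA i) b" using Q_cls assms by blast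
      then show "a \<in> X" using adj1 ab unfolding cls_def by auto
    qed
    then have "ends e \<inter> X = {} \<or> ends e \<inter> X = {a,b}" using ab by auto
    then show False using c1 ab(2) by auto
  qed
  then show "e \<in> F \<inter> complete_cut E ends X" using e unfolding partial_cut_def by auto
qed

lemma light_double: assumes "n < m" "v \<in> V" "cls (QA n) v \<in> Lt n"
  shows "2 * card (cls (QA n) v) \<le> card (cls (QA (Suc n)) v)"
proof -
  let ?X = "cls (QA n) v" and ?Z = "cls (QA (Suc n)) v"
  have XQ: "?X \<in> Q n" unfolding Q_def using cls_in_comps[OF assms(2)] .
  have Z: "?X \<subseteq> ?Z" "?Z \<in> Q (Suc n)" using Q_sub_next[OF XQ assms(1) cls_self[OF assms(2)]] by auto
  have H: "hv n ?Z \<in> Q n" "hv n ?Z \<subseteq> ?Z" "card ?X \<le> card (hv n ?Z)"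
    using hv_prop[OF Z(2) assms(1)] XQ Z(1) by auto
  have "hv n ?Z \<noteq> ?X" using assms(3) Z(2) unfolding Lt_def by blast
  then have disj: "hv n ?Z \<inter> ?X = {}" using comps_disj H(1) XQ unfolding Q_def by blast
  have finZ: "finite ?Z" using finite_subset[OF cls_sub finV] .
  have "card (hv n ?Z \<union> ?X) = card (hv n ?Z) + card ?X"
    using disj finite_subset[OF H(2) finZ] finite_subset[OF Z(1) finZ] by (simp add: card_Un_disjoint)
  moreover have "card (hv n ?Z \<union> ?X) \<le> card ?Z" using H(2) Z(1) finZ by (intro card_mono) auto
  ultimately show ?thesis using H(3) by linarith
qed

lemma light_count_aux: assumes "v \<in> V" "j \<le> m"
  shows "card (cls (QA j) v) * 2 ^ card {i\<in>{j..<m}. cls (QA i) v \<in> Lt i} \<le> card V"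
  using assms(2)
proof (induction j rule: inc_induct)
  case base
  have "card (cls (QA m) v) \<le> card V" using card_mono[OF finV cls_sub] .
  then show ?case by simp
next
  case (step n)
  let ?S = "\<lambda>j. {i\<in>{j..<m}. cls (QA i) v \<in> Lt i}"
  have fin: "finite (?S (Suc n))" by simp
  show ?case
  proof (cases "cls (QA n) v \<in> Lt n")
    case True
    have eq: "?S n = insert n (?S (Suc n))" using True step(2) by auto
    have "card (?S n) = Suc (card (?S (Suc n)))" unfolding eq using fin by simp
    then have "card (cls (QA n) v) * 2 ^ card (?S n) = (2 * card (cls (QA n) v)) * 2 ^ card (?S (Suc n))"
      by simp
    also have "\<dots> \<le> card (cls (QA (Suc n)) v) * 2 ^ card (?S (Suc n))"
      using light_double[OF step(2) assms(1) True] by simp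
    finally show ?thesis using step(3) by linarith
  next
    case False
    have eq: "?S n = ?S (Suc n)"
    proof
      show "?S n \<subseteq> ?S (Suc n)"
      proof
        fix x assume x: "x \<in> ?S n"
        then have "x \<noteq> n" using False by auto
        then show "x \<in> ?S (Suc n)" using x by auto
      qed
    qed auto
    have "card (cls (QA n) v) \<le> card (cls (QA (Suc n)) v)"
      using cls_mono[OF QA_mono[of n "Suc n"]] step(2) finite_subset[OF cls_sub finV]
      by (intro card_mono) auto
    then have "card (cls (QA n) v) * 2 ^ card (?S n) \<le> card (cls (QA (Suc n)) v) * 2 ^ card (?S (Suc n))"
      unfolding eq by simp
    then show ?thesis using step(3) by linarith
  qed
qed

lemma light_count: assumes "v \<in> V"
  shows "real (card {i\<in>{..<m}. cls (QA i) v \<in> Lt i}) \<le> log 2 (real (card V))"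
proof -
  have "card (cls (QA 0) v) * 2 ^ card {i\<in>{0..<m}. cls (QA i) v \<in> Lt i} \<le> card V"
    using light_count_aux[OF assms le0] .
  moreover have "card (cls (QA 0) v) \<ge> 1"
  proof -
    have "finite (cls (QA 0) v)" using finite_subset[OF cls_sub finV] .
    moreover have "cls (QA 0) v \<noteq> {}" using cls_self[OF assms] by blast
    ultimately show ?thesis by (simp add: Suc_le_eq card_gt_0_iff)
  qed
  ultimately have "1 * 2 ^ card {i\<in>{0..<m}. cls (QA i) v \<in> Lt i} \<le> card V"
    using order_trans[OF mult_le_mono1] by blast
  then have "2 ^ card {i\<in>{..<m}. cls (QA i) v \<in> Lt i} \<le> card V"
    unfolding atLeast0LessThan by simp
  then show ?thesis by (rule le_log2_of_power)
qed

lemma count_pairs: assumes "v \<in> V"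
  shows "card {p\<in>Prs. v \<in> snd p} = card {i\<in>{..<m}. cls (QA i) v \<in> Lt i}"
proof -
  have eq: "{p\<in>Prs. v \<in> snd p} = (\<lambda>i. (i, cls (QA i) v)) ` {i\<in>{..<m}. cls (QA i) v \<in> Lt i}"
  proof
    show "{p\<in>Prs. v \<in> snd p} \<subseteq> (\<lambda>i. (i, cls (QA i) v)) ` {i\<in>{..<m}. cls (QA i) v \<in> Lt i}"
    proof
      fix p assume p: "p \<in> {p\<in>Prs. v \<in> snd p}"
      obtain i X where iX: "p = (i,X)" by (cases p)
      have "i < m" "X \<in> Lt i" "v \<in> X" using p unfolding iX Prs_def by auto
      moreover have "X = cls (QA i) v" using Q_cls[of X i v] \<open>X \<in> Lt i\<close> \<open>v \<in> X\<close> unfolding Lt_def by blast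
      ultimately have "i \<in> {i\<in>{..<m}. cls (QA i) v \<in> Lt i}" "p = (i, cls (QA i) v)" using iX by simp_all
      then show "p \<in> (\<lambda>i. (i, cls (QA i) v)) ` {i\<in>{..<m}. cls (QA i) v \<in> Lt i}"
        by (rule rev_image_eqI)
    qed
  next
    show "(\<lambda>i. (i, cls (QA i) v)) ` {i\<in>{..<m}. cls (QA i) v \<in> Lt i} \<subseteq> {p\<in>Prs. v \<in> snd p}"
    proof
      fix p assume "p \<in> (\<lambda>i. (i, cls (QA i) v)) ` {i\<in>{..<m}. cls (QA i) v \<in> Lt i}"
      then obtain i where "i < m" "cls (QA i) v \<in> Lt i" "p = (i, cls (QA i) v)" by blast
      then show "p \<in> {p\<in>Prs. v \<in> snd p}" unfolding Prs_def using cls_self[OF assms] by simp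
    qed
  qed
  have inj: "inj_on (\<lambda>i. (i, cls (QA i) v)) {i\<in>{..<m}. cls (QA i) v \<in> Lt i}"
    by (rule inj_onI) simp
  show ?thesis unfolding eq by (rule card_image[OF inj])
qed

lemma Prs_Q: "p \<in> Prs \<Longrightarrow> snd p \<in> Q (fst p)" unfolding Prs_def Lt_def by auto

lemma cost_bound: "(\<Sum>p\<in>Prs. cost c (cutp p)) \<le> 2 * cost c F * log 2 (real (card V))"
proof -
  have finF: "finite F" using finite_subset[OF FE finE] .
  have cF: "\<forall>e\<in>F. c e \<ge> 0" using cnn FE by auto
  let ?ind = "\<lambda>p e. if e \<in> complete_cut E ends (snd p) then c e else 0"
  have "cost c (cutp p) \<le> (\<Sum>e\<in>F. ?ind p e)" if p: "p \<in> Prs" for p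
  proof -
    have sub: "cutp p \<subseteq> F \<inter> complete_cut E ends (snd p)"
      unfolding cutp_def using cut_sub[OF Prs_Q[OF p]] .
    have "cost c (cutp p) \<le> (\<Sum>e\<in>F \<inter> complete_cut E ends (snd p). c e)"
      unfolding cost_def using sub finF cF by (intro sum_mono2) auto
    also have "\<dots> = (\<Sum>e\<in>F. ?ind p e)" using finF by (simp add: sum.inter_restrict)
    finally show ?thesis .
  qed
  then have "(\<Sum>p\<in>Prs. cost c (cutp p)) \<le> (\<Sum>p\<in>Prs. \<Sum>e\<in>F. ?ind p e)" by (rule sum_mono)
  also have "\<dots> = (\<Sum>e\<in>F. \<Sum>p\<in>Prs. ?ind p e)" by (rule sum.swap)
  also have "\<dots> = (\<Sum>e\<in>F. c e * real (card {p\<in>Prs. e \<in> complete_cut E ends (snd p)}))"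
  proof (rule sum.cong)
    fix e assume "e \<in> F"
    have "(\<Sum>p\<in>Prs. ?ind p e) = (\<Sum>p\<in>{p\<in>Prs. e \<in> complete_cut E ends (snd p)}. c e)"
      using Prs_fin by (simp add: sum.If_cases Int_def)
    then show "(\<Sum>p\<in>Prs. ?ind p e) = c e * real (card {p\<in>Prs. e \<in> complete_cut E ends (snd p)})"
      by (simp add: mult.commute)
  qed simp
  also have "\<dots> \<le> (\<Sum>e\<in>F. c e * (2 * log 2 (real (card V))))"
  proof (rule sum_mono)
    fix e assume eF: "e \<in> F"
    then have eE: "e \<in> E" using FE by auto
    obtain a b where ab: "ends e = {a,b}" "a \<in> V" "b \<in> V" using ends2[OF eE] by blast
    have "{p\<in>Prs. e \<in> complete_cut E ends (snd p)} \<subseteq> {p\<in>Prs. a \<in> snd p} \<union> {p\<in>Prs. b \<in> snd p}"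
    proof
      fix p assume "p \<in> {p\<in>Prs. e \<in> complete_cut E ends (snd p)}"
      then have "p \<in> Prs" "card (ends e \<inter> snd p) = 1" unfolding complete_cut_def by auto
      then have "ends e \<inter> snd p \<noteq> {}" by force
      then show "p \<in> {p\<in>Prs. a \<in> snd p} \<union> {p\<in>Prs. b \<in> snd p}" using ab(1) \<open>p \<in> Prs\<close> by auto
    qed
    then have "card {p\<in>Prs. e \<in> complete_cut E ends (snd p)} \<le> card ({p\<in>Prs. a \<in> snd p} \<union> {p\<in>Prs. b \<in> snd p})"
      using Prs_fin by (intro card_mono) auto
    also have "\<dots> \<le> card {p\<in>Prs. a \<in> snd p} + card {p\<in>Prs. b \<in> snd p}" by (rule card_Un_le)
    finally have "real (card {p\<in>Prs. e \<in> complete_cut E ends (snd p)}) \<le> real (card {p\<in>Prs. a \<in> snd p}) + real (card {p\<in>Prs. b \<in> snd p})"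
      by linarith
    also have "\<dots> \<le> 2 * log 2 (real (card V))"
      using light_count[OF ab(2)] light_count[OF ab(3)] count_pairs[OF ab(2)] count_pairs[OF ab(3)] by simp
    finally show "c e * real (card {p\<in>Prs. e \<in> complete_cut E ends (snd p)}) \<le> c e * (2 * log 2 (real (card V)))"
      using cF eF by (intro mult_left_mono) auto
  qed
  also have "\<dots> = 2 * cost c F * log 2 (real (card V))"
  proof -
    have "(\<Sum>e\<in>F. c e * (2 * log 2 (real (card V)))) = (\<Sum>e\<in>F. c e) * (2 * log 2 (real (card V)))"
      by (rule sum_distrib_right[symmetric])
    then show ?thesis unfolding cost_def by simp
  qed
  finally show ?thesis .
qed

definition cross :: "'v set \<Rightarrow> 'v set \<Rightarrow> bool" where
  "cross X Y \<longleftrightarrow> Y \<inter> X \<noteq> {} \<and> Y - X \<noteq> {}"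

definition sc :: "nat \<Rightarrow> 'v set \<Rightarrow> nat" where
  "sc i Y = card {X\<in>Q i. X \<inter> Y \<noteq> {}}"

lemma s_step: assumes "i < m" "Y \<noteq> {}" "Y \<subseteq> V"
  shows "real (sc i Y) - real (sc (Suc i) Y) \<le> real (card {X\<in>Lt i. cross X Y})"
proof -
  let ?M = "\<lambda>i. {X\<in>Q i. X \<inter> Y \<noteq> {}}"
  have finM: "finite (?M j)" for j using Q_fin by simp
  have finL: "finite {X\<in>Lt i. X \<inter> Y \<noteq> {}}" using Q_fin unfolding Lt_def by simp
  have sub: "?M i \<subseteq> {X\<in>Lt i. X \<inter> Y \<noteq> {}} \<union> hv i ` ?M (Suc i)"
  proof
    fix X assume X: "X \<in> ?M i"
    show "X \<in> {X\<in>Lt i. X \<inter> Y \<noteq> {}} \<union> hv i ` ?M (Suc i)"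
    proof (cases "X \<in> Lt i")
      case True then show ?thesis using X by simp
    next
      case False
      then obtain Z where Z: "Z \<in> Q (Suc i)" "X = hv i Z" using X unfolding Lt_def by auto
      have "X \<subseteq> Z" using hv_prop[OF Z(1) assms(1)] Z(2) by simp
      then have "Z \<in> ?M (Suc i)" using X Z(1) by auto
      then show ?thesis using Z(2) by blast
    qed
  qed
  have "sc i Y \<le> card ({X\<in>Lt i. X \<inter> Y \<noteq> {}} \<union> hv i ` ?M (Suc i))"
    unfolding sc_def using sub finL finM by (intro card_mono) auto
  also have "\<dots> \<le> card {X\<in>Lt i. X \<inter> Y \<noteq> {}} + card (hv i ` ?M (Suc i))" by (rule card_Un_le)
  also have "\<dots> \<le> card {X\<in>Lt i. X \<inter> Y \<noteq> {}} + sc (Suc i) Y"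
    unfolding sc_def using card_image_le[OF finM] by simp
  finally have ineq: "sc i Y \<le> card {X\<in>Lt i. X \<inter> Y \<noteq> {}} + sc (Suc i) Y" .
  show ?thesis
  proof (cases "sc i Y \<ge> 2")
    case True
    have "{X\<in>Lt i. X \<inter> Y \<noteq> {}} \<subseteq> {X\<in>Lt i. cross X Y}"
    proof
      fix X assume X: "X \<in> {X\<in>Lt i. X \<inter> Y \<noteq> {}}"
      then have XQ: "X \<in> Q i" unfolding Lt_def by auto
      have "Y - X \<noteq> {}"
      proof
        assume "Y - X = {}"
        then have YX: "Y \<subseteq> X" by blast
        have "?M i \<subseteq> {X}"
        proof
          fix X' assume X': "X' \<in> ?M i"
          then have "X' \<inter> X \<noteq> {}" using YX by blast
          then show "X' \<in> {X}" using comps_disj X' XQ unfolding Q_def by blast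
        qed
        then have "sc i Y \<le> 1" unfolding sc_def using card_mono[of "{X}"] by fastforce
        then show False using True by simp
      qed
      then show "X \<in> {X\<in>Lt i. cross X Y}" using X unfolding cross_def by blast
    qed
    then have "card {X\<in>Lt i. X \<inter> Y \<noteq> {}} \<le> card {X\<in>Lt i. cross X Y}"
      using Q_fin unfolding Lt_def by (intro card_mono) auto
    then show ?thesis using ineq by linarith
  next
    case False
    obtain v where v: "v \<in> Y" using assms(2) by blast
    have "cls (QA (Suc i)) v \<in> ?M (Suc i)"
      using cls_in_comps[of v] cls_self[of v] v assms(3) unfolding Q_def by blast
    then have "sc (Suc i) Y \<ge> 1" unfolding sc_def using finM
      by (metis One_nat_def Suc_leI card_gt_0_iff empty_iff)
    then show ?thesis using False by simp
  qed
qed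

lemma s_top: assumes "Y \<noteq> {}" "Y \<subseteq> V" shows "sc m Y = 1"
proof -
  have "{X\<in>Q m. X \<inter> Y \<noteq> {}} = {V}" using Qm assms by auto
  then show ?thesis unfolding sc_def by simp
qed

lemma s_tele: assumes "l \<le> m" "Y \<noteq> {}" "Y \<subseteq> V"
  shows "real (sc l Y) - 1 \<le> (\<Sum>i\<in>{l..<m}. real (card {X\<in>Lt i. cross X Y}))"
proof -
  have "j \<le> m \<longrightarrow> real (sc l Y) - real (sc j Y) \<le> (\<Sum>i\<in>{l..<j}. real (card {X\<in>Lt i. cross X Y}))"
    if "l \<le> j" for j
    using that
  proof (induction j rule: dec_induct)
    case base then show ?case by simp
  next
    case (step n)
    show ?case
    proof
      assume "Suc n \<le> m"
      then have "real (sc l Y) - real (sc n Y) \<le> (\<Sum>i\<in>{l..<n}. real (card {X\<in>Lt i. cross X Y}))"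
        using step(3) by simp
      moreover have "real (sc n Y) - real (sc (Suc n) Y) \<le> real (card {X\<in>Lt n. cross X Y})"
        using s_step \<open>Suc n \<le> m\<close> assms(2,3) by simp
      ultimately show "real (sc l Y) - real (sc (Suc n) Y) \<le> (\<Sum>i\<in>{l..<Suc n}. real (card {X\<in>Lt i. cross X Y}))"
        using step(1) by simp
    qed
  qed
  from this[OF assms(1)] show ?thesis using s_top[OF assms(2,3)] by simp
qed

lemma count_cross: assumes "l \<le> m"
  shows "card {p\<in>Prs. l \<le> fst p \<and> cross (snd p) Y} = (\<Sum>i\<in>{l..<m}. card {X\<in>Lt i. cross X Y})"
proof -
  have "{p\<in>Prs. l \<le> fst p \<and> cross (snd p) Y} = Sigma {l..<m} (\<lambda>i. {X\<in>Lt i. cross X Y})"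
    unfolding Prs_def by auto
  moreover have "finite {X\<in>Lt i. cross X Y}" for i using Q_fin unfolding Lt_def by simp
  ultimately show ?thesis by (simp add: card_SigmaI)
qed

lemma Q_cover: "card (Q l) \<le> (\<Sum>Y\<in>P l. sc l Y)"
proof -
  have "Q l \<subseteq> (\<Union>Y\<in>P l. {X\<in>Q l. X \<inter> Y \<noteq> {}})"
  proof
    fix X assume X: "X \<in> Q l"
    then obtain v where v: "v \<in> X" using comps_nonempty unfolding Q_def by blast
    then have vV: "v \<in> V" using X comps_sub unfolding Q_def by blast
    have "cls (lt E (tau l)) v \<in> P l" unfolding P_def using cls_in_comps[OF vV] .
    moreover have "X \<inter> cls (lt E (tau l)) v \<noteq> {}" using v cls_self[OF vV] by blast
    ultimately show "X \<in> (\<Union>Y\<in>P l. {X\<in>Q l. X \<inter> Y \<noteq> {}})" using X by blast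
  qed
  moreover have "finite (\<Union>Y\<in>P l. {X\<in>Q l. X \<inter> Y \<noteq> {}})"
    by (rule finite_subset[OF _ Q_fin[of l]]) blast
  ultimately have "card (Q l) \<le> card (\<Union>Y\<in>P l. {X\<in>Q l. X \<inter> Y \<noteq> {}})"
    by (intro card_mono)
  also have "\<dots> \<le> (\<Sum>Y\<in>P l. card {X\<in>Q l. X \<inter> Y \<noteq> {}})"
    using comps_fin unfolding P_def by (rule card_UN_le)
  finally show ?thesis unfolding sc_def .
qed

end

context inst begin

lemma cut_comps: assumes p: "p \<in> Prs" and l: "l \<le> fst p"
  shows "card (P l) + card {Y\<in>P l. cross (snd p) Y} \<le> k (lt (E - cutp p) (tau l))"
proof -
  define X where "X = snd p"
  define i where "i = fst p"
  define A where "A = lt (E - cutp p) (tau l)"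
  define B where "B = lt E (tau l)"
  have im: "i < m" "X \<in> Q i" using p unfolding X_def i_def Prs_def Lt_def by auto
  have li: "tau l \<le> tau i" using tau_mono l im(1) unfolding i_def by simp
  have AE: "A \<subseteq> E" unfolding A_def lt_def by auto
  have AB: "A \<subseteq> B" unfolding A_def B_def lt_def by auto
  have noncross: "a \<in> X \<longleftrightarrow> b \<in> X" if e: "e \<in> A" "ends e = {a,b}" for e a b
  proof -
    have eE: "e \<in> E" and we: "w e < tau i" and nc: "e \<notin> cutp p"
      using e li unfolding A_def lt_def by auto
    have "card (ends e \<inter> X) \<noteq> 1"
      using nc eE we unfolding cutp_def partial_cut_def complete_cut_def X_def i_def by auto
    then show ?thesis using e(2) by (cases "a \<in> X"; cases "b \<in> X") auto
  qed
  have side: "u \<in> X \<longleftrightarrow> v \<in> X" if "u \<in> cls A v" for u v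
  proof -
    have "(v,u) \<in> (adj ends A)\<^sup>*" using that unfolding cls_def by auto
    then show ?thesis
    proof (induction rule: rtrancl_induct)
      case base then show ?case by simp
    next
      case (step y z)
      then obtain e where "e \<in> A" "ends e = {y,z}" unfolding adj_def by auto
      then show ?case using noncross step(3) by blast
    qed
  qed
  define pc where "pc v = (if v \<in> X then cls B v \<inter> X else cls B v - X)" for v
  have pc_eq: "pc u = pc v" if "u \<in> cls A v" for u v
  proof -
    have "u \<in> cls B v" using that cls_mono[OF AB] by blast
    then have "cls B u = cls B v" by (rule cls_eq)
    then show ?thesis unfolding pc_def using side[OF that] by simp
  qed
  define g where "g K = pc (SOME u. u \<in> K)" for K
  have "pc ` V \<subseteq> g ` comps A"
  proof
    fix x assume "x \<in> pc ` V"
    then obtain v where v: "v \<in> V" "x = pc v" by blast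
    have "(SOME u. u \<in> cls A v) \<in> cls A v" using cls_self[OF v(1)] by (rule someI)
    then have "g (cls A v) = pc v" unfolding g_def using pc_eq by blast
    then show "x \<in> g ` comps A" using v cls_in_comps[OF v(1)] by (metis image_eqI)
  qed
  then have c1: "card (pc ` V) \<le> k A"
    unfolding k_def using comps_fin by (meson card_image_le card_mono finite_imageI order_trans)
  let ?I1 = "{Y\<in>P l. Y \<inter> X \<noteq> {}}" and ?I2 = "{Y\<in>P l. Y - X \<noteq> {}}"
  have PB: "P l = comps B" unfolding P_def B_def ..
  have eqU: "pc ` V = (\<lambda>Y. Y \<inter> X) ` ?I1 \<union> (\<lambda>Y. Y - X) ` ?I2"
  proof
    show "pc ` V \<subseteq> (\<lambda>Y. Y \<inter> X) ` ?I1 \<union> (\<lambda>Y. Y - X) ` ?I2"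
    proof
      fix x assume "x \<in> pc ` V"
      then obtain v where v: "v \<in> V" "x = pc v" by blast
      have Y: "cls B v \<in> P l" using cls_in_comps[OF v(1)] PB by simp
      show "x \<in> (\<lambda>Y. Y \<inter> X) ` ?I1 \<union> (\<lambda>Y. Y - X) ` ?I2"
      proof (cases "v \<in> X")
        case True
        then have "cls B v \<in> ?I1" using Y cls_self[OF v(1)] by blast
        then show ?thesis using v(2) True unfolding pc_def by auto
      next
        case False
        then have "cls B v \<in> ?I2" using Y cls_self[OF v(1)] by blast
        then show ?thesis using v(2) False unfolding pc_def by auto
      qed
    qed
  next
    show "(\<lambda>Y. Y \<inter> X) ` ?I1 \<union> (\<lambda>Y. Y - X) ` ?I2 \<subseteq> pc ` V"
    proof
      fix x assume "x \<in> (\<lambda>Y. Y \<inter> X) ` ?I1 \<union> (\<lambda>Y. Y - X) ` ?I2"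
      then consider (a) Y where "Y \<in> ?I1" "x = Y \<inter> X" | (b) Y where "Y \<in> ?I2" "x = Y - X" by blast
      then show "x \<in> pc ` V"
      proof cases
        case a
        then obtain v where v: "v \<in> Y" "v \<in> X" by blast
        have vV: "v \<in> V" using a(1) v(1) comps_sub PB by blast
        have "Y = cls B v" using comps_cls a(1) v(1) PB by blast
        then have "x = pc v" unfolding pc_def using a(2) v(2) by simp
        then show ?thesis using vV by blast
      next
        case b
        then obtain v where v: "v \<in> Y" "v \<notin> X" by blast
        have vV: "v \<in> V" using b(1) v(1) comps_sub PB by blast
        have "Y = cls B v" using comps_cls b(1) v(1) PB by blast
        then have "x = pc v" unfolding pc_def using b(2) v(2) by simp
        then show ?thesis using vV by blast
      qed
    qed
  qed
  have finP: "finite (P l)" unfolding PB by (rule comps_fin)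
  have disj: "(\<lambda>Y. Y \<inter> X) ` ?I1 \<inter> (\<lambda>Y. Y - X) ` ?I2 = {}" by auto
  have inj1: "inj_on (\<lambda>Y. Y \<inter> X) ?I1"
  proof
    fix Y Y' assume "Y \<in> ?I1" "Y' \<in> ?I1" "Y \<inter> X = Y' \<inter> X"
    then show "Y = Y'" using comps_disj PB by blast
  qed
  have inj2: "inj_on (\<lambda>Y. Y - X) ?I2"
  proof
    fix Y Y' assume "Y \<in> ?I2" "Y' \<in> ?I2" "Y - X = Y' - X"
    then show "Y = Y'" using comps_disj PB by blast
  qed
  have fI1: "finite ((\<lambda>Y. Y \<inter> X) ` ?I1)" using finP by simp
  have fI2: "finite ((\<lambda>Y. Y - X) ` ?I2)" using finP by simp
  have "card (pc ` V) = card ((\<lambda>Y. Y \<inter> X) ` ?I1) + card ((\<lambda>Y. Y - X) ` ?I2)"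
    unfolding eqU by (rule card_Un_disjoint[OF fI1 fI2 disj])
  also have "\<dots> = card ?I1 + card ?I2" using card_image[OF inj1] card_image[OF inj2] by argo
  finally have "card (pc ` V) = card ?I1 + card ?I2" .
  moreover have "card ?I1 + card ?I2 = card (P l) + card {Y\<in>P l. cross X Y}"
  proof -
    have "?I1 \<union> ?I2 = P l" using comps_nonempty PB by blast
    moreover have "?I1 \<inter> ?I2 = {Y\<in>P l. cross X Y}" unfolding cross_def by blast
    ultimately show ?thesis using card_Un_Int[of ?I1 ?I2] finP by simp
  qed
  ultimately show ?thesis using c1 unfolding A_def X_def by simp
qed

lemma ind_card: "finite A \<Longrightarrow> (\<Sum>x\<in>A. if Pr x then 1 else 0 :: real) = real (card {x\<in>A. Pr x})"
  by (simp add: sum.If_cases Int_def)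

lemma k_cut_ge: "card (P l) \<le> k (lt (E - cutp p) (tau l))"
  unfolding P_def k_def[symmetric] by (rule k_mono) (auto simp: lt_def)

lemma level_ineq: assumes "l < m"
  shows "real (card (Q l)) - real (card (P l))
     \<le> (\<Sum>p\<in>Prs. real (k (lt (E - cutp p) (tau l))) - real (card (P l)))"
proof -
  have finP: "finite (P l)" unfolding P_def by (rule comps_fin)
  let ?ind = "\<lambda>p Y. if l \<le> fst p \<and> cross (snd p) Y then 1 else (0::real)"
  have "real (card (Q l)) \<le> real (\<Sum>Y\<in>P l. sc l Y)" using Q_cover[of l] by (simp only: of_nat_le_iff)
  then have "real (card (Q l)) - real (card (P l)) \<le> (\<Sum>Y\<in>P l. real (sc l Y)) - real (card (P l))"
    by (simp only: of_nat_sum)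
  also have "\<dots> = (\<Sum>Y\<in>P l. real (sc l Y) - 1)" by (simp add: sum_subtractf)
  also have "\<dots> \<le> (\<Sum>Y\<in>P l. \<Sum>i\<in>{l..<m}. real (card {X\<in>Lt i. cross X Y}))"
  proof (rule sum_mono)
    fix Y assume Y: "Y \<in> P l"
    then have "Y \<noteq> {}" "Y \<subseteq> V" using comps_nonempty comps_sub unfolding P_def by auto
    then show "real (sc l Y) - 1 \<le> (\<Sum>i\<in>{l..<m}. real (card {X\<in>Lt i. cross X Y}))"
      using s_tele assms by simp
  qed
  also have "\<dots> = (\<Sum>Y\<in>P l. real (card {p\<in>Prs. l \<le> fst p \<and> cross (snd p) Y}))"
  proof (rule sum.cong)
    fix Y assume "Y \<in> P l"
    show "(\<Sum>i\<in>{l..<m}. real (card {X\<in>Lt i. cross X Y})) = real (card {p\<in>Prs. l \<le> fst p \<and> cross (snd p) Y})"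
      using count_cross[of l Y] assms by (simp only: of_nat_sum less_imp_le)
  qed simp
  also have "\<dots> = (\<Sum>Y\<in>P l. \<Sum>p\<in>Prs. ?ind p Y)"
    using ind_card[OF Prs_fin] by simp
  also have "\<dots> = (\<Sum>p\<in>Prs. \<Sum>Y\<in>P l. ?ind p Y)" by (rule sum.swap)
  also have "\<dots> \<le> (\<Sum>p\<in>Prs. real (k (lt (E - cutp p) (tau l))) - real (card (P l)))"
  proof (rule sum_mono)
    fix p assume p: "p \<in> Prs"
    show "(\<Sum>Y\<in>P l. ?ind p Y) \<le> real (k (lt (E - cutp p) (tau l))) - real (card (P l))"
    proof (cases "l \<le> fst p")
      case True
      have "(\<Sum>Y\<in>P l. ?ind p Y) = real (card {Y\<in>P l. cross (snd p) Y})"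
        using ind_card[OF finP] True by simp
      then show ?thesis using cut_comps[OF p True] by simp
    next
      case False
      then show ?thesis using k_cut_ge[of l p] by simp
    qed
  qed
  finally show ?thesis .
qed

lemma f_diff: assumes "H \<subseteq> E"
  shows "f H - f E = (\<Sum>l\<in>{1..<m}. d l * (real (k (lt H (tau l))) - real (card (P l))))"
  unfolding f_def P_def k_def[symmetric] by (simp add: sum_subtractf[symmetric] algebra_simps)

lemma profit_main: "profit V E ends w F \<le> (\<Sum>p\<in>Prs. profit V E ends w (cutp p))"
proof -
  have EF: "E - F \<subseteq> E" by auto
  have ME: "MST V ends w E = ereal (f E)" using MST_eq[OF order_refl connE] .
  have pF: "profit V E ends w F = ereal (f (E - F) - f E)"
    unfolding profit_def using MST_eq[OF EF connEF] ME by simp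
  have pc: "ereal (f (E - cutp p) - f E) \<le> profit V E ends w (cutp p)" for p
  proof -
    have "ereal (f (E - cutp p)) \<le> MST V ends w (E - cutp p)" using MST_ge by auto
    then have "ereal (f (E - cutp p)) - ereal (f E) \<le> MST V ends w (E - cutp p) - ereal (f E)"
      by (rule ereal_minus_mono) simp
    then show ?thesis unfolding profit_def ME by simp
  qed
  have "f (E - F) - f E = (\<Sum>l\<in>{1..<m}. d l * (real (card (Q l)) - real (card (P l))))"
    using f_diff[OF EF] unfolding Q_def QA_def k_def by simp
  also have "\<dots> \<le> (\<Sum>l\<in>{1..<m}. d l * (\<Sum>p\<in>Prs. real (k (lt (E - cutp p) (tau l))) - real (card (P l))))"
  proof (rule sum_mono)
    fix l assume l: "l \<in> {1..<m}"
    then show "d l * (real (card (Q l)) - real (card (P l))) \<le> d l * (\<Sum>p\<in>Prs. real (k (lt (E - cutp p) (tau l))) - real (card (P l)))"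
      using level_ineq d_nn by (intro mult_left_mono) auto
  qed
  also have "\<dots> = (\<Sum>p\<in>Prs. \<Sum>l\<in>{1..<m}. d l * (real (k (lt (E - cutp p) (tau l))) - real (card (P l))))"
    by (simp add: sum_distrib_left sum.swap[of _ Prs])
  also have "\<dots> = (\<Sum>p\<in>Prs. f (E - cutp p) - f E)"
    using f_diff by (intro sum.cong) auto
  finally have "ereal (f (E - F) - f E) \<le> ereal (\<Sum>p\<in>Prs. f (E - cutp p) - f E)" by simp
  also have "\<dots> = (\<Sum>p\<in>Prs. ereal (f (E - cutp p) - f E))" by (simp add: sum_ereal)
  also have "\<dots> \<le> (\<Sum>p\<in>Prs. profit V E ends w (cutp p))" using pc by (rule sum_mono)
  finally show ?thesis using pF by simp
qed

end


theorem mainTheorem6: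
  fixes V :: "'v set" and E :: "'e set" and ends :: "'e \<Rightarrow> 'v set"
    and w c :: "'e \<Rightarrow> real" and F :: "'e set"
  assumes "graph V E ends"
    and "card V \<ge> 2"
    and "connected_graph V ends E"
    and "\<forall>e\<in>E. w e \<ge> 0"
    and "\<forall>e\<in>E. c e > 0"
    and "F \<subseteq> E"
    and "connected_graph V ends (E - F)"
  shows "\<exists>(t::nat) (S :: nat \<Rightarrow> 'v set) (W :: nat \<Rightarrow> real).
           t \<le> card V
         \<and> (\<forall>i\<in>{1..<t}. S i \<noteq> {} \<and> S i \<subset> V)
         \<and> (\<Sum>i=1..<t. cost c (partial_cut E ends w (S i) (W i)))
              \<le> 2 * cost c F * log 2 (real (card V))
         \<and> (\<Sum>i=1..<t. profit V E ends w (partial_cut E ends w (S i) (W i)))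
              \<ge> profit V E ends w F"
proof -
  have Vne: "V \<noteq> {}" using assms(2) by auto
  interpret I: inst V E ends w F c
    unfolding inst_def inst_axioms_def wg_def wg_axioms_def mg_def
    using assms Vne by (auto simp: less_imp_le)
  obtain h where h: "bij_betw h {0..<card I.Prs} I.Prs" using ex_bij_betw_nat_finite[OF I.Prs_fin] by blast
  define t where "t = card I.Prs + 1"
  define S where "S i = snd (h (i - 1))" for i
  define W where "W i = I.tau (fst (h (i - 1)))" for i
  have pc: "partial_cut E ends w (S i) (W i) = I.cutp (h (i - 1))" for i
    unfolding S_def W_def I.cutp_def ..
  have reidx: "(\<Sum>i=1..<t. G (h (i - 1))) = (\<Sum>p\<in>I.Prs. G p)" for G :: "nat \<times> 'v set \<Rightarrow> 'a::comm_monoid_add"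
  proof -
    have "(\<Sum>i=1..<t. G (h (i - 1))) = (\<Sum>i=0..<card I.Prs. G (h i))"
      unfolding t_def using sum.shift_bounds_Suc_ivl[of "\<lambda>i. G (h (i - 1))" 0 "card I.Prs"] by simp
    also have "\<dots> = (\<Sum>p\<in>I.Prs. G p)" using sum.reindex_bij_betw[OF h] .
    finally show ?thesis .
  qed
  have "t \<le> card V" unfolding t_def using I.card_Prs by simp
  moreover have "\<forall>i\<in>{1..<t}. S i \<noteq> {} \<and> S i \<subset> V"
  proof
    fix i assume i: "i \<in> {1..<t}"
    then have "i - 1 \<in> {0..<card I.Prs}" unfolding t_def by auto
    then have "h (i - 1) \<in> I.Prs" using h bij_betwE by blast
    then have "fst (h (i - 1)) < I.m" "snd (h (i - 1)) \<in> I.Lt (fst (h (i - 1)))" unfolding I.Prs_def by auto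
    then show "S i \<noteq> {} \<and> S i \<subset> V" using I.Lt_proper unfolding S_def by blast
  qed
  moreover have "(\<Sum>i=1..<t. cost c (partial_cut E ends w (S i) (W i))) \<le> 2 * cost c F * log 2 (real (card V))"
    unfolding pc reidx[of "\<lambda>p. cost c (I.cutp p)"] using I.cost_bound .
  moreover have "(\<Sum>i=1..<t. profit V E ends w (partial_cut E ends w (S i) (W i))) \<ge> profit V E ends w F"
    unfolding pc reidx[of "\<lambda>p. profit V E ends w (I.cutp p)"] using I.profit_main .
  ultimately show ?thesis by blast
qed

end
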